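(* Let $n\ge 2$ and let $P\in\mathrm{Mat}(n^2,\mathbb{C})$ be an orthogonal projection (i.e. $P^*=P$, $P^2=P$) of rank $r$. Put $P_1=P\otimes I_n$ and $P_2=I_n\otimes P$ in $\mathrm{Mat}(n^3,\mathbb{C})$. Then (a) $\operatorname{tr}_3(P_1P_2)\le rn$, and equality holds if and only if $P=0$ or $P=I_n\otimes I_n$; (b) $\operatorname{tr}_3\big((P_1P_2)^2\big)\le \operatorname{tr}_3(P_1P_2)$, and equality holds if and only if $P_1P_2=P_2P_1$.
   Context: $I_n$ is the $n\times n$ identity matrix, $\otimes$ is the Kronecker product, $P^*$ is the conjugate transpose, and $\operatorname{tr}_3$ denotes the ordinary matrix trace on $\mathrm{Mat}(n^3,\mathbb{C})$. *)

theory Defs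
  imports "Jordan_Normal_Form.Schur_Decomposition" "Jordan_Normal_Form.DL_Rank"
begin

definition mtrace :: "'a::comm_ring_1 mat \<Rightarrow> 'a" where
  "mtrace A = (\<Sum>i<dim_row A. A $$ (i, i))"

(* Kronecker product, standard block convention: (A \<otimes> B)[(i,k),(j,l)] = A[i,j] * B[k,l] *)
definition kron :: "'a::times mat \<Rightarrow> 'a mat \<Rightarrow> 'a mat" where
  "kron A B = mat (dim_row A * dim_row B) (dim_col A * dim_col B)
     (\<lambda>(i, j). A $$ (i div dim_row B, j div dim_col B) * B $$ (i mod dim_row B, j mod dim_col B))"

end

theory Submission
  imports Defs
begin

definition adj :: "complex mat \<Rightarrow> complex mat" where
  "adj A = mat (dim_col A) (dim_row A) (\<lambda>(i,j). cnj (A $$ (j,i)))"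

lemma adj_index[simp]: "i < dim_col A \<Longrightarrow> j < dim_row A \<Longrightarrow> adj A $$ (i,j) = cnj (A $$ (j,i))"
  "dim_row (adj A) = dim_col A" "dim_col (adj A) = dim_row A"
  by (auto simp: adj_def)
lemma adj_carrier[simp]: "A \<in> carrier_mat m k \<Longrightarrow> adj A \<in> carrier_mat k m"
  unfolding carrier_mat_def by simp
lemma mult_idx: "A \<in> carrier_mat m k \<Longrightarrow> B \<in> carrier_mat k l \<Longrightarrow> i < m \<Longrightarrow> j < l \<Longrightarrow>
  (A * B) $$ (i,j) = (\<Sum>t<k. A $$ (i,t) * B $$ (t,j))"
  by (simp add: scalar_prod_def atLeast0LessThan)

lemma adj_mult: assumes A: "A \<in> carrier_mat m k" and B: "B \<in> carrier_mat k l"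
  shows "adj (A * B) = adj B * adj A"
proof (rule eq_matI)
  fix i j assume "i < dim_row (adj B * adj A)" "j < dim_col (adj B * adj A)"
  hence i: "i < l" and j: "j < m" using A B by auto
  have "adj (A * B) $$ (i,j) = cnj ((A * B) $$ (j,i))" using A B i j by simp
  also have "\<dots> = (\<Sum>t<k. cnj (A $$ (j,t)) * cnj (B $$ (t,i)))" using A B i j by (simp add: mult_idx del: index_mult_mat(1))
  also have "\<dots> = (\<Sum>t<k. adj B $$ (i,t) * adj A $$ (t,j))" 
    using A B i j by (intro sum.cong) (auto simp: mult.commute)
  also have "\<dots> = (adj B * adj A) $$ (i,j)" using A B i j by (subst mult_idx[of "adj B" l k "adj A" m]) auto
  finally show "adj (A * B) $$ (i,j) = (adj B * adj A) $$ (i,j)" .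
qed (use A B in auto)

lemma adj_minus: assumes "A \<in> carrier_mat m k" "B \<in> carrier_mat m k" shows "adj (A - B) = adj A - adj B"
  by (rule eq_matI) (use assms in auto)

lemma mat_adjoint_adj: "mat_adjoint A = adj A"
  by (rule eq_matI) (auto simp: mat_adjoint_def mat_of_rows_def)

lemma mtrace_comm: assumes A: "A \<in> carrier_mat m k" and B: "B \<in> carrier_mat k m" 
  shows "mtrace (A * B) = mtrace (B * A)"
proof -
  have "mtrace (A * B) = (\<Sum>i<m. \<Sum>t<k. A $$ (i,t) * B $$ (t,i))"
    unfolding mtrace_def using A B by (auto simp: mult_idx simp del: index_mult_mat(1))
  also have "\<dots> = (\<Sum>t<k. \<Sum>i<m. B $$ (t,i) * A $$ (i,t))"
    by (subst sum.swap) (simp add: mult.commute)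
  also have "\<dots> = mtrace (B * A)"
    unfolding mtrace_def using A B by (auto simp: mult_idx simp del: index_mult_mat(1))
  finally show ?thesis .
qed

lemma mtrace_minus: assumes "A \<in> carrier_mat m m" "B \<in> carrier_mat m m" 
  shows "mtrace (A - B) = mtrace A - mtrace B"
  unfolding mtrace_def using assms by (auto simp: sum_subtractf)

lemma fro: assumes X: "X \<in> carrier_mat m k"
  shows "mtrace (X * adj X) = of_real (\<Sum>i<m. \<Sum>j<k. (cmod (X $$ (i,j)))^2)"
proof -
  have "mtrace (X * adj X) = (\<Sum>i<m. \<Sum>j<k. X $$ (i,j) * cnj (X $$ (i,j)))"
    unfolding mtrace_def using X by (intro sum.cong) (auto simp: mult_idx[OF X adj_carrier[OF X]] simp del: index_mult_mat(1))
  also have "\<dots> = of_real (\<Sum>i<m. \<Sum>j<k. (cmod (X $$ (i,j)))^2)"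
    by (simp only: of_real_sum complex_norm_square)
  finally show ?thesis .
qed

lemma fro_real: "X \<in> carrier_mat m k \<Longrightarrow> mtrace (X * adj X) \<in> \<real>"
  by (simp add: fro)

lemma fro_nonneg: "X \<in> carrier_mat m k \<Longrightarrow> Re (mtrace (X * adj X)) \<ge> 0"
  by (simp add: fro sum_nonneg)

lemma fro_zero: assumes X: "X \<in> carrier_mat m k" shows "mtrace (X * adj X) = 0 \<longleftrightarrow> X = 0\<^sub>m m k"
proof
  assume "mtrace (X * adj X) = 0"
  then have "(\<Sum>i<m. \<Sum>j<k. (cmod (X $$ (i,j)))^2) = 0" using fro[OF X] by (metis of_real_eq_0_iff)
  then have "\<forall>i\<in>{..<m}. (\<Sum>j<k. (cmod (X $$ (i,j)))^2) = 0"
    by (subst (asm) sum_nonneg_eq_0_iff) (auto intro: sum_nonneg)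
  then have "\<forall>i<m. \<forall>j<k. X $$ (i,j) = 0"
    by (auto simp: sum_nonneg_eq_0_iff)
  then show "X = 0\<^sub>m m k" using X by (intro eq_matI) auto
next
  assume "X = 0\<^sub>m m k" then show "mtrace (X * adj X) = 0" by (simp add: mtrace_def)
qed

lemma minus_zero_iff: fixes A C :: "complex mat" assumes A: "A \<in> carrier_mat m k" and C: "C \<in> carrier_mat m k"
  shows "A - C = 0\<^sub>m m k \<longleftrightarrow> A = C"
proof
  assume h: "A - C = 0\<^sub>m m k"
  show "A = C"
  proof (rule eq_matI)
    fix i j assume ij: "i < dim_row C" "j < dim_col C"
    then have "(A - C) $$ (i,j) = 0" using h C by simp
    then have "A $$ (i,j) - C $$ (i,j) = 0" using ij by simp
    then show "A $$ (i,j) = C $$ (i,j)" by simp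
  next
    show "dim_row A = dim_row C" using A C by simp
  next
    show "dim_col A = dim_col C" using A C by simp
  qed
next
  assume "A = C" then show "A - C = 0\<^sub>m m k" using C by simp
qed
lemma proj_pair:
  assumes A: "A \<in> carrier_mat N N" and B: "B \<in> carrier_mat N N"
  and hA: "adj A = A" and hB: "adj B = B" and iA: "A * A = A" and iB: "B * B = B"
  shows "mtrace (A*B) \<in> \<real>" "Re (mtrace (A*B)) \<le> Re (mtrace A)"
    "mtrace (A*B) = mtrace A \<longleftrightarrow> B*A = A"
    "mtrace (A*B*(A*B)) \<in> \<real>" "Re (mtrace (A*B*(A*B))) \<le> Re (mtrace (A*B))"
    "mtrace (A*B*(A*B)) = mtrace (A*B) \<longleftrightarrow> A*B = B*A"
proof -
  have AB[simp]: "A * B \<in> carrier_mat N N" "B * A \<in> carrier_mat N N" using A B by auto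
  note assocN[simp] = assoc_mult_mat[of _ N N _ N _ N]
  note multN[simp] = mult_carrier_mat[of _ N N _ N]
  have ABA[simp]: "A * (B * A) \<in> carrier_mat N N" "B * (A * B) \<in> carrier_mat N N"
    "A * (B * (A * B)) \<in> carrier_mat N N" "B * (A * (B * A)) \<in> carrier_mat N N" using A B by auto
  have iA'[simp]: "A * (A * X) = A * X" if "X \<in> carrier_mat N N" for X
    by (subst assoc_mult_mat[symmetric, OF A A that]) (simp add: iA)
  have iB'[simp]: "B * (B * X) = B * X" if "X \<in> carrier_mat N N" for X
    by (subst assoc_mult_mat[symmetric, OF B B that]) (simp add: iB)
  have adjAB: "adj (A * B) = B * A" using adj_mult[OF A B] hA hB by simp
  have adjBA: "adj (B * A) = A * B" using adj_mult[OF B A] hA hB by simp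
  note cyc = mtrace_comm[of _ N N]
  have tA: "mtrace A = mtrace (A * adj A)" using hA iA by simp
  have t1: "mtrace (A * (B * A)) = mtrace (A * B)"
  proof -
    have "mtrace (A * (B * A)) = mtrace ((B * A) * A)" using cyc[OF A AB(2)] .
    also have "\<dots> = mtrace (B * A)" using A B iA by simp
    also have "\<dots> = mtrace (A * B)" using cyc[OF B A] .
    finally show ?thesis .
  qed
  have t2: "mtrace (B * (A * B)) = mtrace (A * B)"
    using cyc[OF B, of "A*B"] A B iB by simp
  have t3: "mtrace (B * (A * (B * A))) = mtrace (A * (B * (A * B)))"
    using cyc[OF B, of "A*(B*A)"] A B assoc_mult_mat[of A N N "B*A" N B N] by simp
  have t4: "mtrace (A * (B * (A * (B * A)))) = mtrace (A * (B * (A * B)))"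
  proof -
    have "mtrace (A * (B * (A * (B * A)))) = mtrace (B * (A * (B * A)) * A)"
      using cyc[OF A, of "B*(A*(B*A))"] A B by simp
    also have "B * (A * (B * A)) * A = B * (A * (B * A))"
    proof -
      have e1: "A * (B * A) * A = A * (B * A)"
        using assoc_mult_mat[OF A AB(2) A] assoc_mult_mat[OF B A A] iA by simp
      show ?thesis using assoc_mult_mat[OF B ABA(1) A] e1 by simp
    qed
    finally show ?thesis using t3 by simp
  qed
  have f1: "mtrace (A*B) = mtrace ((A*B) * adj (A*B))"
    unfolding adjAB using A B t1 by simp
  show r1: "mtrace (A*B) \<in> \<real>" using f1 fro_real[OF AB(1)] by simp
  define X where "X = A - A * B"
  have X: "X \<in> carrier_mat N N" unfolding X_def using A B by (auto intro: minus_carrier_mat)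
  have adjX: "adj X = A - B * A" unfolding X_def using A B
    by (simp add: adj_minus[of _ N N] adjAB hA)
  have f2: "mtrace (X * adj X) = mtrace A - mtrace (A*B)"
    unfolding adjX unfolding X_def using A B t1
    by (simp add: minus_mult_distrib_mat[of _ N N _ _ N] iA iB mult_minus_distrib_mat[of _ N N _ N] 
        mtrace_minus[of _ N] minus_carrier_mat)
  show "Re (mtrace (A*B)) \<le> Re (mtrace A)" using fro_nonneg[OF X] f2 by simp
  have "mtrace (A*B) = mtrace A \<longleftrightarrow> X = 0\<^sub>m N N" using fro_zero[OF X] f2 by auto
  also have "\<dots> \<longleftrightarrow> A * B = A" unfolding X_def using A B
    using minus_zero_iff[OF A AB(1)] by auto
  also have "\<dots> \<longleftrightarrow> B * A = A"
  proof
    assume "A * B = A" then have "adj (A * B) = adj A" by simp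
    then show "B * A = A" using adjAB hA by simp
  next
    assume "B * A = A" then have "adj (B * A) = adj A" by simp
    then show "A * B = A" using adjBA hA by simp
  qed
  finally show "mtrace (A*B) = mtrace A \<longleftrightarrow> B*A = A" .
  have adjABA: "adj (A * (B * A)) = A * (B * A)" using adj_mult[OF A AB(2)] adjBA hA A B by simp
  define Y where "Y = B * A - A * (B * A)"
  have Y: "Y \<in> carrier_mat N N" unfolding Y_def using A B by (auto intro: minus_carrier_mat)
  have adjY: "adj Y = A * B - A * (B * A)" unfolding Y_def using A B
    by (simp add: adj_minus[of _ N N] adjABA adjBA)
  have f3: "mtrace (Y * adj Y) = mtrace (A*B) - mtrace (A*B*(A*B))"
  proof -
    have M: "A * B - A * (B * A) \<in> carrier_mat N N" by (auto intro: minus_carrier_mat)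
    have c4: "A*(B*(A*(B*A))) \<in> carrier_mat N N" by (rule mult_carrier_mat[OF A ABA(4)])
    have p1: "(B*A)*(A*B) = B*(A*B)" using A B by simp
    have p2: "(B*A)*(A*(B*A)) = B*(A*(B*A))" using A B by simp
    have p3: "(A*(B*A))*(A*B) = A*(B*(A*B))" using A B by simp
    have p4: "(A*(B*A))*(A*(B*A)) = A*(B*(A*(B*A)))" using A B by simp
    have "Y * adj Y = (B*A)*(A*B - A*(B*A)) - (A*(B*A))*(A*B - A*(B*A))"
      unfolding adjY unfolding Y_def by (rule minus_mult_distrib_mat[OF AB(2) ABA(1) M])
    also have "\<dots> = (B*(A*B) - B*(A*(B*A))) - (A*(B*(A*B)) - A*(B*(A*(B*A))))"
      unfolding mult_minus_distrib_mat[OF AB(2) AB(1) ABA(1)] mult_minus_distrib_mat[OF ABA(1) AB(1) ABA(1)]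
        p1 p2 p3 p4 ..
    finally have "mtrace (Y * adj Y) = mtrace ((B*(A*B) - B*(A*(B*A))) - (A*(B*(A*B)) - A*(B*(A*(B*A)))))"
      by simp
    also have "\<dots> = (mtrace (B*(A*B)) - mtrace (B*(A*(B*A)))) - (mtrace (A*(B*(A*B))) - mtrace (A*(B*(A*(B*A)))))"
      using mtrace_minus[OF minus_carrier_mat[OF ABA(4)] minus_carrier_mat[OF c4]]
        mtrace_minus[OF ABA(2) ABA(4)] mtrace_minus[OF ABA(3) c4] by (simp only:)
    also have "\<dots> = mtrace (A*B) - mtrace (A*(B*(A*B)))" unfolding t2 t3 t4 by simp
    also have "A*(B*(A*B)) = A*B*(A*B)" using A B by simp
    finally show ?thesis .
  qed
  have "mtrace (A*B*(A*B)) = mtrace (A*B) - mtrace (Y * adj Y)" using f3 by simp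
  then show "mtrace (A*B*(A*B)) \<in> \<real>" using fro_real[OF Y] r1 by (simp add: Reals_diff)
  show "Re (mtrace (A*B*(A*B))) \<le> Re (mtrace (A*B))" using fro_nonneg[OF Y] f3 by simp
  have "mtrace (A*B*(A*B)) = mtrace (A*B) \<longleftrightarrow> Y = 0\<^sub>m N N" using fro_zero[OF Y] f3 by auto
  also have "\<dots> \<longleftrightarrow> B * A = A * (B * A)" unfolding Y_def using A B
    by (simp add: minus_zero_iff[of _ N N])
  also have "\<dots> \<longleftrightarrow> A * B = B * A"
  proof
    assume h: "B * A = A * (B * A)"
    have "A * B = adj (B * A)" using adjBA by simp
    also have "\<dots> = adj (A * (B * A))" by (simp only: h[symmetric])
    also have "\<dots> = A * (B * A)" using adj_mult[OF A AB(2)] adjBA hA A B by simp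
    finally have e: "A * B = A * (B * A)" .
    show "A * B = B * A" using e h by metis
  next
    assume h: "A * B = B * A"
    show "B * A = A * (B * A)" by (simp only: h[symmetric]) (use A B in simp)
  qed
  finally show "mtrace (A*B*(A*B)) = mtrace (A*B) \<longleftrightarrow> A*B = B*A" .
qed

lemma sum_split: "(\<Sum>z<c*d. g z) = (\<Sum>u<c. \<Sum>v<d. g (u*d+v))" for g :: "nat \<Rightarrow> 'a::comm_monoid_add"
proof -
  have "(\<Sum>z<c*d. g z) = (\<Sum>u<c. sum g {u*d..<u*d+d})" by (rule sum.nat_group[symmetric])
  also have "\<dots> = (\<Sum>u<c. \<Sum>v<d. g (u*d+v))"
    by (rule sum.cong[OF refl], subst sum.atLeastLessThan_shift_0) (simp add: atLeast0LessThan)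
  finally show ?thesis .
qed

lemma kron_dims[simp]: "dim_row (kron A B) = dim_row A * dim_row B" "dim_col (kron A B) = dim_col A * dim_col B"
  by (auto simp: kron_def)

lemma kron_carrier: assumes "A \<in> carrier_mat a c" "B \<in> carrier_mat b d" shows "kron A B \<in> carrier_mat (a*b) (c*d)"
  using assms unfolding carrier_mat_def by simp

lemma kron_index: "i < dim_row A * dim_row B \<Longrightarrow> j < dim_col A * dim_col B \<Longrightarrow>
  kron A B $$ (i,j) = A $$ (i div dim_row B, j div dim_col B) * B $$ (i mod dim_row B, j mod dim_col B)"
  by (auto simp: kron_def)

lemma divmod_bound: "u < c \<Longrightarrow> v < (d::nat) \<Longrightarrow> u * d + v < c * d"
proof -
  assume "u < c" "v < d"
  then have "u * d + v < u * d + d" by simp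
  also have "\<dots> = Suc u * d" by simp
  also have "\<dots> \<le> c * d" using \<open>u < c\<close> by (intro mult_right_mono) auto
  finally show ?thesis .
qed

lemma kron_mult:
  fixes A B C D :: "complex mat"
  assumes A: "A \<in> carrier_mat a c" and B: "B \<in> carrier_mat b d" and C: "C \<in> carrier_mat c e"
    and D: "D \<in> carrier_mat d f"
  shows "kron A B * kron C D = kron (A * C) (B * D)"
proof (rule eq_matI)
  fix i j assume "i < dim_row (kron (A * C) (B * D))" "j < dim_col (kron (A * C) (B * D))"
  then have i: "i < a * b" and j: "j < e * f" using A B C D by auto
  have b: "b > 0" and f: "f > 0" using i j by (auto intro: Nat.gr0I)
  have ib: "i div b < a" "i mod b < b" using i b by (auto simp: less_mult_imp_div_less mult.commute)
  have jf: "j div f < e" "j mod f < f" using j f by (auto simp: less_mult_imp_div_less mult.commute)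
  have "(kron A B * kron C D) $$ (i,j) = (\<Sum>z<c*d. kron A B $$ (i,z) * kron C D $$ (z,j))"
    using A B C D i j by (intro mult_idx[of _ "a*b" "c*d" _ "e*f"]) (auto intro: kron_carrier)
  also have "\<dots> = (\<Sum>u<c. \<Sum>v<d. kron A B $$ (i,u*d+v) * kron C D $$ (u*d+v,j))"
    by (rule sum_split)
  also have "\<dots> = (\<Sum>u<c. \<Sum>v<d. (A $$ (i div b, u) * C $$ (u, j div f)) * (B $$ (i mod b, v) * D $$ (v, j mod f)))"
  proof (intro sum.cong refl)
    fix u v assume u: "u \<in> {..<c}" and v: "v \<in> {..<d}"
    then have "u*d+v < c*d" by (auto intro: divmod_bound)
    moreover have "(u*d+v) div d = u" "(u*d+v) mod d = v" using v by auto
    ultimately show "kron A B $$ (i,u*d+v) * kron C D $$ (u*d+v,j) =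
      (A $$ (i div b, u) * C $$ (u, j div f)) * (B $$ (i mod b, v) * D $$ (v, j mod f))"
      using A B C D i j by (simp add: kron_index mult_ac)
  qed
  also have "\<dots> = (\<Sum>u<c. A $$ (i div b, u) * C $$ (u, j div f)) * (\<Sum>v<d. B $$ (i mod b, v) * D $$ (v, j mod f))"
    by (simp add: sum_product)
  also have "\<dots> = (A * C) $$ (i div b, j div f) * (B * D) $$ (i mod b, j mod f)"
    using A B C D ib jf by (simp add: mult_idx[of _ a c _ e] mult_idx[of _ b d _ f] del: index_mult_mat(1))
  also have "\<dots> = kron (A * C) (B * D) $$ (i,j)"
    using A B C D i j by (simp add: kron_index)
  finally show "(kron A B * kron C D) $$ (i,j) = kron (A * C) (B * D) $$ (i,j)" .
qed (use A B C D in auto)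

lemma adj_kron: "adj (kron A B) = kron (adj A) (adj B)"
proof (rule eq_matI)
  fix i j assume "i < dim_row (kron (adj A) (adj B))" "j < dim_col (kron (adj A) (adj B))"
  then have i: "i < dim_col A * dim_col B" and j: "j < dim_row A * dim_row B" by auto
  have b: "dim_col B > 0" and f: "dim_row B > 0" using i j by (auto intro: Nat.gr0I)
  have "i div dim_col B < dim_col A" "i mod dim_col B < dim_col B" 
    using i b by (auto simp: less_mult_imp_div_less mult.commute)
  moreover have "j div dim_row B < dim_row A" "j mod dim_row B < dim_row B" 
    using j f by (auto simp: less_mult_imp_div_less mult.commute)
  ultimately show "adj (kron A B) $$ (i,j) = kron (adj A) (adj B) $$ (i,j)"
    using i j by (simp add: kron_index)
qed auto

lemma mtrace_kron: 
  fixes A B :: "complex mat"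
  assumes A: "A \<in> carrier_mat a a" and B: "B \<in> carrier_mat b b"
  shows "mtrace (kron A B) = mtrace A * mtrace B"
proof -
  have "mtrace (kron A B) = (\<Sum>z<a*b. kron A B $$ (z,z))" using A B by (simp add: mtrace_def)
  also have "\<dots> = (\<Sum>u<a. \<Sum>v<b. A $$ (u,u) * B $$ (v,v))"
    unfolding sum_split
  proof (intro sum.cong refl)
    fix u v assume u: "u \<in> {..<a}" and v: "v \<in> {..<b}"
    then have "u*b+v < a*b" by (auto intro: divmod_bound)
    moreover have "(u*b+v) div b = u" "(u*b+v) mod b = v" using v by auto
    ultimately show "kron A B $$ (u*b+v,u*b+v) = A $$ (u,u) * B $$ (v,v)"
      using A B by (simp add: kron_index)
  qed
  also have "\<dots> = mtrace A * mtrace B" using A B by (simp add: mtrace_def sum_product)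
  finally show ?thesis .
qed

lemma kron_one: "kron (1\<^sub>m a) (1\<^sub>m b) = (1\<^sub>m (a*b) :: complex mat)"
proof (rule eq_matI)
  fix i j assume "i < dim_row (1\<^sub>m (a*b) :: complex mat)" "j < dim_col (1\<^sub>m (a*b) :: complex mat)"
  then have i: "i < a*b" and j: "j < a*b" by auto
  have b: "b > 0" using i by (auto intro: Nat.gr0I)
  have "i div b < a" "i mod b < b" "j div b < a" "j mod b < b"
    using i j b by (auto simp: less_mult_imp_div_less mult.commute)
  moreover have "(i div b = j div b \<and> i mod b = j mod b) \<longleftrightarrow> i = j"
    by (metis div_mult_mod_eq)
  ultimately show "kron (1\<^sub>m a) (1\<^sub>m b) $$ (i,j) = (1\<^sub>m (a*b) :: complex mat) $$ (i,j)"
    using i j by (auto simp: kron_index)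
qed auto

lemma kron_zero: "kron (0\<^sub>m a c) (B :: complex mat) = 0\<^sub>m (a * dim_row B) (c * dim_col B)"
proof (rule eq_matI)
  fix i j assume "i < dim_row (0\<^sub>m (a * dim_row B) (c * dim_col B) :: complex mat)"
     "j < dim_col (0\<^sub>m (a * dim_row B) (c * dim_col B) :: complex mat)"
  then have i: "i < a * dim_row B" and j: "j < c * dim_col B" by auto
  have "i div dim_row B < a" "j div dim_col B < c"
    using i j by (auto simp: less_mult_imp_div_less mult.commute)
  then show "kron (0\<^sub>m a c) B $$ (i,j) = 0\<^sub>m (a * dim_row B) (c * dim_col B) $$ (i,j)"
    using i j by (simp add: kron_index)
qed auto

lemma dm: assumes "b < (m::nat)" shows "(a*m+b) div m = a" "(a*m+b) mod m = b"
  using assms by auto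

lemma e3: assumes "i < n" "j < n" "k < (n::nat)"
  shows "((i*n+j)*n+k) div (n*n) = i" "((i*n+j)*n+k) mod (n*n) = j*n+k"
    "((i*n+j)*n+k) div n = i*n+j" "((i*n+j)*n+k) mod n = k" "(i*n+j)*n+k < n*n*n"
proof -
  have jk: "j*n+k < n*n" using assms by (intro divmod_bound)
  have eq: "(i*n+j)*n+k = i*(n*n) + (j*n+k)" by (simp add: algebra_simps)
  show "((i*n+j)*n+k) div (n*n) = i" "((i*n+j)*n+k) mod (n*n) = j*n+k"
    unfolding eq using dm[OF jk] by auto
  show "((i*n+j)*n+k) div n = i*n+j" "((i*n+j)*n+k) mod n = k" using dm[of k n] assms by auto
  show "(i*n+j)*n+k < n*n*n" using assms by (intro divmod_bound) auto
qed

lemma sum_delta_mult: "k < (n::nat) \<Longrightarrow> (\<Sum>x<n. f x * (if x = k then g else 0)) = f k * (g::complex)"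
proof -
  assume k: "k < n"
  have "(\<Sum>x<n. f x * (if x = k then g else 0)) = (\<Sum>x<n. if x = k then f x * g else 0)"
    by (intro sum.cong) auto
  also have "\<dots> = f k * g" by (subst sum.delta[OF finite_lessThan]) (use k in simp)
  finally show ?thesis .
qed

lemma struct_q:
  fixes q :: "nat \<Rightarrow> nat \<Rightarrow> nat \<Rightarrow> nat \<Rightarrow> complex"
  assumes H: "\<And>i j k' c1 c2 k. i<n \<Longrightarrow> j<n \<Longrightarrow> k'<n \<Longrightarrow> c1<n \<Longrightarrow> c2<n \<Longrightarrow> k<n \<Longrightarrow>
      (\<Sum>j2<n. q j k' j2 k * q i j2 c1 c2) = (if k = k' then q i j c1 c2 else 0)"
    and a: "a<n" and b: "b<n" and c1: "c1<n" and c2: "c2<n" and nz: "q a b c1 c2 \<noteq> 0"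
    and j: "j<n" and k': "k'<n" and k: "k<n" and k2: "k2<n"
  shows "q j k' k k2 = (if j = k \<and> k' = k2 then 1 else 0)"
proof -
  define Q where "Q = q a b c1 c2"
  define S where "S = (\<Sum>c1'<n. \<Sum>c2'<n. (\<Sum>j2<n. q j k' j2 k2 * q b j2 c1' c2') * (if c2' = k then q a c1' c1 c2 else 0))"
  have "S = (\<Sum>c1'<n. \<Sum>c2'<n. (if k2 = k' then q b j c1' c2' else 0) * (if c2' = k then q a c1' c1 c2 else 0))"
    unfolding S_def using H[OF b j k' _ _ k2] by (intro sum.cong refl) auto
  also have "\<dots> = (\<Sum>c1'<n. (if k2 = k' then q b j c1' k else 0) * q a c1' c1 c2)"
    by (intro sum.cong refl, rule sum_delta_mult[OF k])
  also have "\<dots> = (if k2 = k' then (\<Sum>c1'<n. q b j c1' k * q a c1' c1 c2) else 0)"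
    by auto
  also have "\<dots> = (if k2 = k' then (if k = j then Q else 0) else 0)"
    using H[OF a b j c1 c2 k] unfolding Q_def by simp
  finally have S1: "S = (if k2 = k' \<and> k = j then Q else 0)" by simp
  have "S = (\<Sum>c1'<n. \<Sum>c2'<n. \<Sum>j2<n. q j k' j2 k2 * (q b j2 c1' c2' * (if c2' = k then q a c1' c1 c2 else 0)))"
    unfolding S_def by (simp add: sum_distrib_right mult.assoc)
  also have "\<dots> = (\<Sum>c1'<n. \<Sum>j2<n. \<Sum>c2'<n. q j k' j2 k2 * (q b j2 c1' c2' * (if c2' = k then q a c1' c1 c2 else 0)))"
    by (rule sum.cong[OF refl], rule sum.swap)
  also have "\<dots> = (\<Sum>j2<n. \<Sum>c1'<n. \<Sum>c2'<n. q j k' j2 k2 * (q b j2 c1' c2' * (if c2' = k then q a c1' c1 c2 else 0)))"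
    by (rule sum.swap)
  also have "\<dots> = (\<Sum>j2<n. q j k' j2 k2 * (\<Sum>c1'<n. \<Sum>c2'<n. q b j2 c1' c2' * (if c2' = k then q a c1' c1 c2 else 0)))"
    by (simp add: sum_distrib_left)
  also have "\<dots> = (\<Sum>j2<n. q j k' j2 k2 * (\<Sum>c1'<n. q b j2 c1' k * q a c1' c1 c2))"
    by (intro sum.cong refl arg_cong2[where f="(*)"] sum_delta_mult[OF k])
  also have "\<dots> = (\<Sum>j2<n. q j k' j2 k2 * (if k = j2 then Q else 0))"
    unfolding Q_def by (intro sum.cong refl arg_cong2[where f="(*)"] H[OF a b _ c1 c2 k]) auto
  also have "\<dots> = q j k' k k2 * Q" 
  proof -
    have "(\<Sum>j2<n. q j k' j2 k2 * (if k = j2 then Q else 0)) = (\<Sum>j2<n. q j k' j2 k2 * (if j2 = k then Q else 0))"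
      by (intro sum.cong) auto
    also have "\<dots> = q j k' k k2 * Q" by (rule sum_delta_mult[OF k])
    finally show ?thesis .
  qed
  finally have S2: "S = q j k' k k2 * Q" .
  have "q j k' k k2 * Q = (if j = k \<and> k' = k2 then 1 else 0) * Q" using S1 S2 by auto
  then show ?thesis using nz unfolding Q_def by simp
qed


lemma sum3_delta:
  assumes i: "i < (n::nat)" and k: "k < n"
  shows "(\<Sum>i2<n. \<Sum>j2<n. \<Sum>k2<n. if i2 = i \<and> k2 = k then F j2 else (0::complex)) = (\<Sum>j2<n. F j2)"
proof -
  have "(\<Sum>i2<n. \<Sum>j2<n. \<Sum>k2<n. if i2 = i \<and> k2 = k then F j2 else (0::complex))
      = (\<Sum>i2<n. if i2 = i then (\<Sum>j2<n. F j2) else 0)"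
  proof (rule sum.cong[OF refl])
    fix i2 show "(\<Sum>j2<n. \<Sum>k2<n. if i2 = i \<and> k2 = k then F j2 else 0) = (if i2 = i then (\<Sum>j2<n. F j2) else 0)"
    proof (cases "i2 = i")
      case True
      have "(\<Sum>j2<n. \<Sum>k2<n. if i2 = i \<and> k2 = k then F j2 else 0) = (\<Sum>j2<n. \<Sum>k2<n. if k2 = k then F j2 else 0)"
        using True by simp
      also have "\<dots> = (\<Sum>j2<n. F j2)"
        by (rule sum.cong[OF refl]) (subst sum.delta[OF finite_lessThan], use k in simp)
      finally show ?thesis using True by simp
    qed simp
  qed
  also have "\<dots> = (\<Sum>j2<n. F j2)" by (subst sum.delta[OF finite_lessThan]) (use i in simp)
  finally show ?thesis .
qed

lemma kron_fix:
  fixes P :: "complex mat"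
  assumes P: "P \<in> carrier_mat (n*n) (n*n)"
    and eq: "kron (1\<^sub>m n) P * kron P (1\<^sub>m n) = kron P (1\<^sub>m n)"
    and i: "i<n" and j: "j<n" and k': "k'<n" and c1: "c1<n" and c2: "c2<n" and k: "k<n"
  shows "(\<Sum>j2<n. P $$ (j*n+k', j2*n+k) * P $$ (i*n+j2, c1*n+c2)) = (if k = k' then P $$ (i*n+j, c1*n+c2) else 0)"
proof -
  define x where "x = (i*n+j)*n+k'"
  define y where "y = (c1*n+c2)*n+k"
  note ex = e3[OF i j k', folded x_def]
  note ey = e3[OF c1 c2 k, folded y_def]
  have dP: "dim_row P = n*n" "dim_col P = n*n" using P by auto
  have P2: "kron (1\<^sub>m n) P \<in> carrier_mat (n*n*n) (n*n*n)"
    using kron_carrier[OF one_carrier_mat P] by (metis mult.assoc)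
  have P1: "kron P (1\<^sub>m n) \<in> carrier_mat (n*n*n) (n*n*n)" by (rule kron_carrier[OF P one_carrier_mat])
  define F where "F = (\<lambda>j2. P $$ (j*n+k', j2*n+k) * P $$ (i*n+j2, c1*n+c2))"
  have "(kron (1\<^sub>m n) P * kron P (1\<^sub>m n)) $$ (x,y)
      = (\<Sum>z<n*n*n. kron (1\<^sub>m n) P $$ (x,z) * kron P (1\<^sub>m n) $$ (z,y))"
    by (rule mult_idx[OF P2 P1 ex(5) ey(5)])
  also have "\<dots> = (\<Sum>i2<n. \<Sum>j2<n. \<Sum>k2<n. kron (1\<^sub>m n) P $$ (x,(i2*n+j2)*n+k2) * kron P (1\<^sub>m n) $$ ((i2*n+j2)*n+k2,y))"
    by (simp only: sum_split)
  also have "\<dots> = (\<Sum>i2<n. \<Sum>j2<n. \<Sum>k2<n. if i2 = i \<and> k2 = k then F j2 else 0)"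
  proof (intro sum.cong refl)
    fix i2 j2 k2 assume "i2 \<in> {..<n}" "j2 \<in> {..<n}" "k2 \<in> {..<n}"
    then have i2: "i2 < n" and j2: "j2 < n" and k2: "k2 < n" by auto
    note ez = e3[OF i2 j2 k2]
    have "kron (1\<^sub>m n) P $$ (x,(i2*n+j2)*n+k2) = (if i = i2 then 1 else 0) * P $$ (j*n+k', j2*n+k2)"
      using ex ez i i2 by (simp add: kron_index dP mult.assoc[symmetric])
    moreover have "kron P (1\<^sub>m n) $$ ((i2*n+j2)*n+k2,y) = P $$ (i2*n+j2, c1*n+c2) * (if k2 = k then 1 else 0)"
      using ey ez k k2 by (simp add: kron_index dP)
    ultimately show "kron (1\<^sub>m n) P $$ (x,(i2*n+j2)*n+k2) * kron P (1\<^sub>m n) $$ ((i2*n+j2)*n+k2,y)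
        = (if i2 = i \<and> k2 = k then F j2 else 0)"
      unfolding F_def by auto
  qed
  also have "\<dots> = (\<Sum>j2<n. F j2)" by (rule sum3_delta[OF i k])
  finally have L: "(kron (1\<^sub>m n) P * kron P (1\<^sub>m n)) $$ (x,y) = (\<Sum>j2<n. F j2)" .
  have R: "kron P (1\<^sub>m n) $$ (x,y) = (if k = k' then P $$ (i*n+j, c1*n+c2) else 0)"
    using ex ey k k' by (simp add: kron_index dP)
  show ?thesis using L R eq unfolding F_def by simp
qed


lemma fix_struct:
  fixes P :: "complex mat"
  assumes P: "P \<in> carrier_mat (n*n) (n*n)"
    and eq: "kron (1\<^sub>m n) P * kron P (1\<^sub>m n) = kron P (1\<^sub>m n)"
  shows "P = 0\<^sub>m (n*n) (n*n) \<or> P = 1\<^sub>m (n*n)"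
proof (cases "P = 0\<^sub>m (n*n) (n*n)")
  case False
  have "\<exists>x y. x < n*n \<and> y < n*n \<and> P $$ (x,y) \<noteq> 0"
  proof (rule ccontr)
    assume "\<not> ?thesis"
    then have "P = 0\<^sub>m (n*n) (n*n)" using P by (intro eq_matI) auto
    then show False using False by simp
  qed
  then obtain x y where x: "x < n*n" and y: "y < n*n" and nz0: "P $$ (x,y) \<noteq> 0" by blast
  have n: "n > 0" using x by (auto intro: Nat.gr0I)
  have dv: "u div n < n" "u mod n < n" "(u div n) * n + u mod n = u" if "u < n*n" for u
    using that n by (auto simp: less_mult_imp_div_less)
  define q where "q = (\<lambda>a b c d. P $$ (a*n+b, c*n+d))"
  have H: "(\<Sum>j2<n. q j k' j2 k * q i j2 c1 c2) = (if k = k' then q i j c1 c2 else 0)"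
    if "i<n" "j<n" "k'<n" "c1<n" "c2<n" "k<n" for i j k' c1 c2 k
    unfolding q_def by (rule kron_fix[OF P eq that])
  have nz: "q (x div n) (x mod n) (y div n) (y mod n) \<noteq> 0" unfolding q_def using dv[OF x] dv[OF y] nz0 by simp
  have Q: "q j k' k k2 = (if j = k \<and> k' = k2 then 1 else 0)" if "j<n" "k'<n" "k<n" "k2<n" for j k' k k2
    by (rule struct_q[OF H dv(1)[OF x] dv(2)[OF x] dv(1)[OF y] dv(2)[OF y] nz that])
  have "P = 1\<^sub>m (n*n)"
  proof (rule eq_matI)
    fix u v assume "u < dim_row (1\<^sub>m (n*n) :: complex mat)" "v < dim_col (1\<^sub>m (n*n) :: complex mat)"
    then have u: "u < n*n" and v: "v < n*n" by auto
    have "P $$ (u,v) = q (u div n) (u mod n) (v div n) (v mod n)" unfolding q_def using dv[OF u] dv[OF v] by simp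
    also have "\<dots> = (if u div n = v div n \<and> u mod n = v mod n then 1 else 0)"
      using Q dv[OF u] dv[OF v] by simp
    also have "\<dots> = (if u = v then 1 else 0)" by (metis div_mult_mod_eq)
    finally show "P $$ (u,v) = 1\<^sub>m (n*n) $$ (u,v)" using u v by simp
  qed (use P in auto)
  then show ?thesis by simp
qed simp

lemma (in vec_space) rank_trace:
  fixes P :: "'a mat"
  assumes P: "P \<in> carrier_mat n n" and idem: "P * P = P"
  shows "mtrace P = of_nat (rank P)"
proof -
  have colsP: "set (cols P) \<subseteq> carrier_vec n" using P by (auto simp: cols_def)
  obtain S where max: "maximal S (\<lambda>T. T \<subseteq> set (cols P) \<and> lin_indpt T)"
    using maximal_exists[of "(\<lambda>T. T \<subseteq> set (cols P) \<and> lin_indpt T)" "card (set (cols P))" "{}"]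
    by (meson List.finite_set card_mono empty_iff empty_subsetI finite_lin_indpt2 rev_finite_subset)
  have SP: "S \<subseteq> set (cols P)" and indS: "lin_indpt S" using max by (auto simp: maximal_def)
  have finS: "finite S" using SP finite_subset by blast
  have SC: "S \<subseteq> carrier_vec n" using SP colsP by auto
  have rk: "rank P = card S" by (rule rank_card_indpt[OF P max])
  obtain bs where bs: "set bs = S" "distinct bs" using finite_distinct_list[OF finS] by blast
  define r where "r = length bs"
  have rS: "r = card S" using bs distinct_card r_def by fastforce
  define B where "B = mat_of_cols n bs"
  have B: "B \<in> carrier_mat n r" unfolding B_def r_def by simp
  have colsB: "cols B = bs" unfolding B_def using bs SC by simp
  have colB: "col B i = bs ! i" if "i < r" for i
    unfolding B_def using that bs SC r_def by (intro col_mat_of_cols) auto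
  have inspan: "v \<in> span S" if v: "v \<in> set (cols P)" for v
  proof (rule ccontr)
    assume ns: "v \<notin> span S"
    have vC: "v \<in> carrier_vec n" using v colsP by auto
    have "v \<notin> S" using ns in_own_span[OF SC] by auto
    then have "lin_indpt (S \<union> {v})" using lin_dep_iff_in_span[OF SC indS vC] ns by auto
    moreover have "S \<union> {v} \<subseteq> set (cols P)" using SP v by auto
    moreover have "S \<subset> S \<union> {v}" using \<open>v \<notin> S\<close> by auto
    ultimately show False using max unfolding maximal_def by blast
  qed
  have coef: "\<exists>c. c \<in> carrier_vec r \<and> B *\<^sub>v c = col P j" if j: "j < n" for j
  proof -
    have "col P j \<in> set (cols P)" using j P by (auto simp: cols_def)
    then have "col P j \<in> span S" by (rule inspan)
    from finite_in_span[OF finS SC this] obtain a where a: "lincomb a S = col P j" by (elim exE conjE)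
    have "B *\<^sub>v vec r (\<lambda>i. a (col B i)) = lincomb a (set (cols B))"
      using mat_mult_eq_lincomb[OF B] colsB bs by simp
    then show ?thesis using a colsB bs by (intro exI[of _ "vec r (\<lambda>i. a (col B i))"]) auto
  qed
  then obtain c where c: "\<And>j. j < n \<Longrightarrow> c j \<in> carrier_vec r \<and> B *\<^sub>v c j = col P j" by metis
  define C where "C = mat r n (\<lambda>(i,j). c j $ i)"
  have C: "C \<in> carrier_mat r n" by (simp add: C_def)
  have colC: "col C j = c j" if "j < n" for j
    using c[OF that] that unfolding C_def by (intro eq_vecI) auto
  have BC: "B * C = P"
  proof (rule eq_matI)
    fix i j assume "i < dim_row P" "j < dim_col P"
    then have i: "i < n" and j: "j < n" using P by auto
    have "(B * C) $$ (i,j) = row B i \<bullet> col C j" using B C i j by simp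
    also have "\<dots> = (B *\<^sub>v c j) $ i" using B i colC[OF j] by simp
    also have "\<dots> = P $$ (i,j)" using c[OF j] P i j by simp
    finally show "(B * C) $$ (i,j) = P $$ (i,j)" .
  qed (use B C P in auto)
  have PB: "P * B = B"
  proof (rule eq_matI)
    fix i j assume "i < dim_row B" "j < dim_col B"
    then have i: "i < n" and j: "j < r" using B by auto
    have "col B j \<in> set (cols P)" using colB[OF j] bs SP j r_def by auto
    then obtain k where k: "k < n" "col B j = col P k" using P by (auto simp: cols_def)
    have "(P * B) $$ (i,j) = row P i \<bullet> col P k" using B P i j k by simp
    also have "\<dots> = (P * P) $$ (i,k)" using P i k by simp
    also have "\<dots> = P $$ (i,k)" using idem by simp
    also have "\<dots> = col B j $ i" using k P i by simp
    also have "\<dots> = B $$ (i,j)" using B i j by simp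
    finally show "(P * B) $$ (i,j) = B $$ (i,j)" .
  qed (use B P in auto)
  have BCB: "B * (C * B) = B"
    using assoc_mult_mat[OF B C B] BC PB by simp
  have CB: "C * B = 1\<^sub>m r"
  proof (rule eq_matI)
    fix i j assume "i < dim_row (1\<^sub>m r :: 'a mat)" "j < dim_col (1\<^sub>m r :: 'a mat)"
    then have i: "i < r" and j: "j < r" by auto
    define x where "x = col (C * B) j - unit_vec r j"
    have x: "x \<in> carrier_vec r" unfolding x_def using C B j by auto
    have "B *\<^sub>v x = B *\<^sub>v col (C * B) j - B *\<^sub>v unit_vec r j"
      unfolding x_def using B C j by (intro mult_minus_distrib_mat_vec) auto
    also have "B *\<^sub>v col (C * B) j = col (B * (C * B)) j"
      by (rule col_mult2[OF B mult_carrier_mat[OF C B] j, symmetric])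
    also have "B *\<^sub>v unit_vec r j = col (B * 1\<^sub>m r) j"
      using col_mult2[OF B one_carrier_mat j] j by simp
    finally have "B *\<^sub>v x = 0\<^sub>v n" using BCB B j by simp
    moreover have "distinct (cols B)" using colsB bs by simp
    ultimately have "x = 0\<^sub>v r"
      using lin_depI[OF B x] indS colsB bs by auto
    then have "x $ i = 0" using i by simp
    then show "(C * B) $$ (i,j) = 1\<^sub>m r $$ (i,j)" unfolding x_def using C B i j by simp
  qed (use C B in auto)
  have "mtrace P = mtrace (B * C)" using BC by simp
  also have "\<dots> = mtrace (C * B)" by (rule mtrace_comm[OF B C])
  also have "\<dots> = of_nat r" unfolding CB by (simp add: mtrace_def)
  finally show ?thesis using rk rS by simp
qed

theorem lemma1:
  fixes n r :: nat and P :: "complex mat"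
  assumes "n \<ge> 2"
    and "P \<in> carrier_mat (n^2) (n^2)"
    and "mat_adjoint P = P"
    and "P * P = P"
    and "vec_space.rank (n^2) P = r"
  defines "P1 \<equiv> kron P (1\<^sub>m n)"
    and "P2 \<equiv> kron (1\<^sub>m n) P"
  shows "mtrace (P1 * P2) \<in> \<real>
         \<and> Re (mtrace (P1 * P2)) \<le> real (r * n)
         \<and> (mtrace (P1 * P2) = of_nat (r * n) \<longleftrightarrow>
              P = 0\<^sub>m (n^2) (n^2) \<or> P = kron (1\<^sub>m n) (1\<^sub>m n))
         \<and> mtrace ((P1 * P2) * (P1 * P2)) \<in> \<real>
         \<and> Re (mtrace ((P1 * P2) * (P1 * P2))) \<le> Re (mtrace (P1 * P2))
         \<and> (mtrace ((P1 * P2) * (P1 * P2)) = mtrace (P1 * P2) \<longleftrightarrow> P1 * P2 = P2 * P1)"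
proof -
  have nn: "n^2 = n*n" by (simp add: power2_eq_square)
  have Pc: "P \<in> carrier_mat (n*n) (n*n)" using assms(2) nn by simp
  have hP: "adj P = P" using assms(3) mat_adjoint_adj by simp
  have idem: "P * P = P" by fact
  have rk: "mtrace P = of_nat r" using vec_space.rank_trace[OF assms(2) assms(4)] assms(5) by simp
  define N where "N = n*n*n"
  have P1c: "P1 \<in> carrier_mat N N" unfolding P1_def N_def by (rule kron_carrier[OF Pc one_carrier_mat])
  have P2c: "P2 \<in> carrier_mat N N" unfolding P2_def N_def
    using kron_carrier[OF one_carrier_mat Pc] by (metis mult.assoc)
  have adj1: "adj (1\<^sub>m n) = 1\<^sub>m n" by (rule eq_matI) auto
  have hP1: "adj P1 = P1" unfolding P1_def adj_kron hP adj1 ..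
  have hP2: "adj P2 = P2" unfolding P2_def adj_kron hP adj1 ..
  have iP1: "P1 * P1 = P1" unfolding P1_def
    using kron_mult[OF Pc one_carrier_mat Pc one_carrier_mat] idem by simp
  have iP2: "P2 * P2 = P2" unfolding P2_def
    using kron_mult[OF one_carrier_mat Pc one_carrier_mat Pc] idem by simp
  have t1: "mtrace (1\<^sub>m n :: complex mat) = of_nat n" by (simp add: mtrace_def)
  have tP1: "mtrace P1 = of_nat (r*n)" unfolding P1_def
    using mtrace_kron[OF Pc one_carrier_mat] rk t1 by simp
  note pp = proj_pair[OF P1c P2c hP1 hP2 iP1 iP2]
  have a2: "Re (mtrace (P1 * P2)) \<le> real (r * n)" using pp(2) tP1 by simp
  have "mtrace (P1 * P2) = of_nat (r * n) \<longleftrightarrow> P2 * P1 = P1" using pp(3) tP1 by simp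
  also have "\<dots> \<longleftrightarrow> P = 0\<^sub>m (n^2) (n^2) \<or> P = kron (1\<^sub>m n) (1\<^sub>m n)"
  proof
    assume "P2 * P1 = P1"
    then have "P = 0\<^sub>m (n*n) (n*n) \<or> P = 1\<^sub>m (n*n)"
      unfolding P1_def P2_def by (rule fix_struct[OF Pc])
    then show "P = 0\<^sub>m (n^2) (n^2) \<or> P = kron (1\<^sub>m n) (1\<^sub>m n)" using nn kron_one by simp
  next
    assume "P = 0\<^sub>m (n^2) (n^2) \<or> P = kron (1\<^sub>m n) (1\<^sub>m n)"
    then show "P2 * P1 = P1"
    proof
      assume "P = 0\<^sub>m (n^2) (n^2)"
      then have "P1 = 0\<^sub>m N N" unfolding P1_def N_def using kron_zero[of "n^2" "n^2" "1\<^sub>m n"] nn by simp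
      then show ?thesis using P2c by simp
    next
      assume "P = kron (1\<^sub>m n) (1\<^sub>m n)"
      then have "P = 1\<^sub>m (n*n)" using kron_one by simp
      then have "P2 = 1\<^sub>m N" unfolding P2_def N_def using kron_one[of n "n*n"] by (simp add: mult.assoc)
      then show ?thesis using P1c by simp
    qed
  qed
  finally have a3: "mtrace (P1 * P2) = of_nat (r * n) \<longleftrightarrow> P = 0\<^sub>m (n^2) (n^2) \<or> P = kron (1\<^sub>m n) (1\<^sub>m n)" .
  show ?thesis using pp(1) a2 a3 pp(4) pp(5) pp(6) by blast
qed


end
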